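(* Let $(Z_k)_{k\in\mathbb{N}}$ be a sequence of independent random variables for which there exist $\alpha,\beta>0$ with $Z_k\in[\alpha,\beta]$ for all $k$. If there exists $p>\tfrac12$ such that $$\limsup_{n\to\infty}\frac{1}{n^p}\sum_{k=1}^n\mathbb{E}[\ln Z_k]<0,$$ then $\lim_{n\to\infty}\prod_{k=1}^nZ_k=0$ almost surely. *)

theory Defs
  imports "HOL-Probability.Probability"
begin

end

theory Submission
  imports Defs "HOL-Real_Asymp.Real_Asymp"
begin

lemma summable_exp_powr:
  fixes c q :: real
  assumes "c > 0" "q > 0"
  shows "summable (\<lambda>n::nat. exp (-c * real n powr q))"
proof (rule summable_comparison_test_ev)
  have "((\<lambda>n::nat. real n ^ 2 * exp (-c * real n powr q)) \<longlongrightarrow> 0) at_top"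
    using assms by real_asymp
  hence "eventually (\<lambda>n::nat. real n ^ 2 * exp (-c * real n powr q) < 1) at_top"
    by (rule order_tendstoD) simp
  moreover have "eventually (\<lambda>n::nat. n > 0) at_top" by (rule eventually_gt_at_top)
  ultimately show "eventually (\<lambda>n::nat. norm (exp (-c * real n powr q)) \<le> inverse (real n ^ 2)) at_top"
  proof eventually_elim
    case (elim n)
    then show ?case by (simp add: field_simps)
  qed
  show "summable (\<lambda>n::nat. inverse (real n ^ 2))"
    using inverse_power_summable[of 2] by simp
qed

theorem lemma4:
  fixes M :: "'a measure" and Z :: "nat \<Rightarrow> 'a \<Rightarrow> real"
    and \<alpha> \<beta> p :: real
  assumes "prob_space M"
    and "\<And>k. Z k \<in> borel_measurable M"
    and "prob_space.indep_vars M (\<lambda>_. borel) Z UNIV"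
    and "\<alpha> > 0" and "\<beta> > 0"
    and "\<And>k \<omega>. \<omega> \<in> space M \<Longrightarrow> \<alpha> \<le> Z k \<omega> \<and> Z k \<omega> \<le> \<beta>"
    and "p > 1/2"
    and "limsup (\<lambda>n. ereal ((\<Sum>k=1..n. prob_space.expectation M (\<lambda>\<omega>. ln (Z k \<omega>))) / real n powr p)) < 0"
  shows "AE \<omega> in M. (\<lambda>n. \<Prod>k=1..n. Z k \<omega>) \<longlonglongrightarrow> 0"
proof -
  interpret prob_space M by fact
  define Y where "Y = (\<lambda>k \<omega>. ln (Z k \<omega>))"
  define \<mu> where "\<mu> = (\<lambda>n. \<Sum>k=1..n. expectation (Y k))"
  define S where "S = (\<lambda>n \<omega>. \<Sum>k=1..n. Y k \<omega>)"
  define a where "a = ln \<alpha> - 1"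
  define b where "b = ln \<beta>"
  define D where "D = (b - a)^2"
  have Ymeas[measurable]: "Y k \<in> borel_measurable M" for k
    unfolding Y_def using assms(2) by measurable
  have indY: "indep_vars (\<lambda>_. borel) Y UNIV"
    unfolding Y_def
    by (rule indep_vars_compose2[OF assms(3), where Y="\<lambda>_ x. ln x"]) simp
  obtain \<omega>0 where "\<omega>0 \<in> space M" using not_empty by blast
  hence ab: "\<alpha> \<le> \<beta>" using assms(6)[of \<omega>0 0] by linarith
  have Ybnd: "a \<le> Y k \<omega> \<and> Y k \<omega> \<le> b" if "\<omega> \<in> space M" for k \<omega>
    using assms(6)[OF that, of k] assms(4) unfolding Y_def a_def b_def
    by (smt (verit) ln_le_cancel_iff)
  have abD: "b - a \<ge> 1" unfolding a_def b_def using ab assms(4) by simp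
  hence Dpos: "D > 0" unfolding D_def by simp
  obtain z where z1: "limsup (\<lambda>n. ereal (\<mu> n / real n powr p)) < ereal z" and z2: "z < 0"
    using ereal_dense2[OF assms(8)] unfolding \<mu>_def Y_def by auto
  define \<epsilon> where "\<epsilon> = - z / 2"
  have \<epsilon>: "\<epsilon> > 0" using z2 by (simp add: \<epsilon>_def)
  define A where "A = (\<lambda>n. {x \<in> space M. \<mu> n + \<epsilon> * real n powr p \<le> S n x})"
  have Ameas[measurable]: "A n \<in> sets M" for n
    unfolding A_def S_def by measurable
  have hoeff: "prob (A n) \<le> exp (- (2 * \<epsilon>^2 / D) * real n powr (2*p - 1))" if n: "n \<ge> 1" for n
  proof -
    interpret H: Hoeffding_ineq M "{1..n}" Y "\<lambda>_. a" "\<lambda>_. b" "\<mu> n"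
    proof unfold_locales
      show "finite {1..n}" by simp
      show "indep_vars (\<lambda>_. borel) Y {1..n}" by (rule indep_vars_subset[OF indY]) auto
      show "AE x in M. Y i x \<in> {a..b}" for i using Ybnd by auto
    qed (simp add: \<mu>_def)
    have sumD: "(\<Sum>i\<in>{1..n}. ((\<lambda>_. b) i - (\<lambda>_. a) i)\<^sup>2) = real n * D"
      by (simp add: D_def)
    have "prob (A n) \<le> exp (-2 * (\<epsilon> * real n powr p)\<^sup>2 / (real n * D))"
      using H.Hoeffding_ineq_ge[of "\<epsilon> * real n powr p"] \<epsilon> Dpos n sumD
      unfolding A_def S_def \<mu>_def by simp
    also have "-2 * (\<epsilon> * real n powr p)\<^sup>2 / (real n * D) = - (2 * \<epsilon>^2 / D) * real n powr (2*p - 1)"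
    proof -
      have "(real n powr p)^2 = real n powr (2*p)"
        by (simp add: power2_eq_square powr_add[symmetric])
      moreover have "real n powr (2*p - 1) = real n powr (2*p) / real n"
        using n by (simp add: powr_diff)
      ultimately show ?thesis using n Dpos by (simp add: power_mult_distrib field_simps)
    qed
    finally show ?thesis by simp
  qed
  have summ: "summable (\<lambda>n. measure M (A n))"
  proof (rule summable_comparison_test_ev)
    show "eventually (\<lambda>n. norm (measure M (A n)) \<le> exp (- (2 * \<epsilon>^2 / D) * real n powr (2*p - 1))) at_top"
      using eventually_ge_at_top[of "1::nat"] by eventually_elim (use hoeff in simp)
    show "summable (\<lambda>n::nat. exp (- (2 * \<epsilon>^2 / D) * real n powr (2*p - 1)))"
      by (rule summable_exp_powr) (use \<epsilon> Dpos assms(7) in auto)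
  qed
  have AE1: "AE x in M. eventually (\<lambda>n. x \<in> space M - A n) sequentially"
    by (rule borel_cantelli_AE1) (use summ in \<open>auto simp: less_top[symmetric]\<close>)
  have ev_mu: "eventually (\<lambda>n. \<mu> n < - 2 * \<epsilon> * real n powr p) sequentially"
  proof -
    have "eventually (\<lambda>n. ereal (\<mu> n / real n powr p) < ereal z) sequentially"
      using Limsup_lessD[OF z1] .
    moreover have "eventually (\<lambda>n::nat. n \<ge> 1) sequentially" by (rule eventually_ge_at_top)
    ultimately show ?thesis
    proof eventually_elim
      case (elim n)
      hence "real n powr p > 0" by simp
      with elim show ?case by (simp add: \<epsilon>_def divide_less_eq)
    qed
  qed
  have lim0: "((\<lambda>n::nat. exp (- \<epsilon> * real n powr p)) \<longlongrightarrow> 0) at_top"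
    using \<epsilon> assms(7) by real_asymp
  show ?thesis
    using AE1
  proof eventually_elim
    case (elim x)
    hence x: "x \<in> space M" using elim by (auto dest: eventually_happens)
    have prodeq: "(\<Prod>k=1..n. Z k x) = exp (S n x)" for n
    proof -
      have "(\<Prod>k=1..n. Z k x) = (\<Prod>k=1..n. exp (Y k x))"
        using assms(6)[OF x] assms(4) unfolding Y_def
        by (intro prod.cong refl) (smt (verit) exp_ln)
      thus ?thesis unfolding S_def by (simp add: exp_sum)
    qed
    show ?case
    proof (rule tendsto_sandwich[OF _ _ tendsto_const lim0])
      show "eventually (\<lambda>n. 0 \<le> (\<Prod>k=1..n. Z k x)) sequentially"
        by (simp only: prodeq) simp
      show "eventually (\<lambda>n. (\<Prod>k=1..n. Z k x) \<le> exp (- \<epsilon> * real n powr p)) sequentially"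
        using elim ev_mu
      proof eventually_elim
        case (elim n)
        hence "S n x < \<mu> n + \<epsilon> * real n powr p" using x unfolding A_def by auto
        with elim have "S n x \<le> - \<epsilon> * real n powr p" by simp
        hence "exp (S n x) \<le> exp (- \<epsilon> * real n powr p)" by simp
        thus ?case using prodeq[of n] by linarith
      qed
    qed
  qed
qed

end
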